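(* Let $\ell\ge1$ and let $G$ be a finite subgraph of the $\mathbb{Z}^\ell$ lattice. Then $\tilde{H}_k(\operatorname{ind}(G);\mathbf{k})=0$ for all $k<\frac{|V(G)|}{2\ell+1}-1$.
   Context: $\mathbf{k}$ is a fixed field. The $\mathbb{Z}^\ell$ lattice is the infinite graph whose vertices are the integer points of $\mathbb{R}^\ell$, two being adjacent when at Euclidean distance $1$. $\operatorname{ind}(G)$ is the simplicial complex on $V(G)$ whose faces are the independent sets of $G$, and $\tilde H_k$ is reduced simplicial homology with coefficients in $\mathbf{k}$. *)

theory Defs
  imports Complex_Main "HOL-Library.List_Lexorder"
begin

definition lattice_adj :: "nat \<Rightarrow> int list \<Rightarrow> int list \<Rightarrow> bool" where
  "lattice_adj l u v \<longleftrightarrow> length u = l \<and> length v = l \<and> (\<Sum>i<l. (u!i - v!i)^2) = 1"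

definition lattice_subgraph :: "nat \<Rightarrow> int list set \<Rightarrow> int list set set \<Rightarrow> bool" where
  "lattice_subgraph l V E \<longleftrightarrow> finite V \<and> (\<forall>x\<in>V. length x = l) \<and>
     E \<subseteq> {{u, v} | u v. u \<in> V \<and> v \<in> V \<and> lattice_adj l u v}"

text \<open>Independence complex: all independent vertex sets (including the empty face).\<close>
definition ind_complex :: "'v set \<Rightarrow> 'v set set \<Rightarrow> 'v set set" where
  "ind_complex V E = {S. S \<subseteq> V \<and> (\<forall>u\<in>S. \<forall>v\<in>S. {u, v} \<notin> E)}"

text \<open>Simplicial k-chains with coefficients in a field: functions on k-faces
  (faces with k+1 vertices; the empty face is the unique (-1)-face: augmented complex).\<close>
definition chains :: "'v set set \<Rightarrow> int \<Rightarrow> ('v set \<Rightarrow> 'a::field) set" where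
  "chains K k = {c. \<forall>S. c S \<noteq> 0 \<longrightarrow> S \<in> K \<and> int (card S) = k + 1}"

text \<open>Simplicial boundary, simplices oriented by the linear order on vertices:
  removing the i-th smallest vertex carries sign (-1)^i.\<close>
definition bd :: "'v::linorder set set \<Rightarrow> ('v set \<Rightarrow> 'a::field) \<Rightarrow> 'v set \<Rightarrow> 'a" where
  "bd K c T = (if T \<in> K then
      (\<Sum>v\<in>(\<Union>K) - T. if insert v T \<in> K
          then (-1) ^ card {w\<in>T. w < v} * c (insert v T) else 0)
     else 0)"

definition reduced_homology_trivial ::
  "'a::field itself \<Rightarrow> 'v::linorder set set \<Rightarrow> int \<Rightarrow> bool" where
  "reduced_homology_trivial TYPE('a) K k \<longleftrightarrow>
     (\<forall>c::'v set \<Rightarrow> 'a. c \<in> chains K k \<and> bd K c = (\<lambda>_. 0) \<longrightarrow>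
        (\<exists>d \<in> chains K (k + 1). bd K d = c))"

end

theory Submission
  imports Defs
begin

definition sg :: "'v::linorder set \<Rightarrow> 'v \<Rightarrow> 'a::field" where
  "sg T u = (-1) ^ card {w\<in>T. w < u}"

lemma sg_sq: "sg T u * sg T u = (1::'a::field)"
  unfolding sg_def by (simp flip: power_mult_distrib)

lemma sg_sq2: "sg T u * (sg T u * x) = (x::'a::field)"
  by (simp add: mult.assoc[symmetric] sg_sq)

lemma sg_nz: "sg T u \<noteq> (0::'a::field)"
  unfolding sg_def by simp

lemma sg_insert:
  assumes "finite T" "u \<notin> T"
  shows "sg (insert u T) w = (if u < w then - sg T w else (sg T w :: 'a::field))"
proof (cases "u < w")
  case True
  then have "{x\<in>insert u T. x < w} = insert u {x\<in>T. x < w}" by auto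
  moreover have "card (insert u {x\<in>T. x < w}) = Suc (card {x\<in>T. x < w})"
    using assms by simp
  ultimately show ?thesis using True by (simp add: sg_def)
next
  case False
  then have "{x\<in>insert u T. x < w} = {x\<in>T. x < w}" by auto
  then show ?thesis using False by (simp add: sg_def)
qed

lemma ind_sub: "S \<in> ind_complex V E \<Longrightarrow> S \<subseteq> V"
  by (simp add: ind_complex_def)

lemma ind_down: "S \<in> ind_complex V E \<Longrightarrow> T \<subseteq> S \<Longrightarrow> T \<in> ind_complex V E"
  by (auto simp: ind_complex_def)

lemma ind_fin: "finite V \<Longrightarrow> S \<in> ind_complex V E \<Longrightarrow> finite S"
  by (meson ind_sub finite_subset)

lemma bd_alt:
  fixes c :: "'v::linorder set \<Rightarrow> 'a::field"
  assumes "finite V"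
  shows "bd (ind_complex V E) c T = (if T \<in> ind_complex V E then
      (\<Sum>u\<in>V - T. if insert u T \<in> ind_complex V E then sg T u * c (insert u T) else 0) else 0)"
proof (cases "T \<in> ind_complex V E")
  case True
  have sub: "\<Union>(ind_complex V E) - T \<subseteq> V - T" using ind_sub by blast
  have "(\<Sum>u\<in>\<Union>(ind_complex V E) - T. if insert u T \<in> ind_complex V E then sg T u * c (insert u T) else 0)
      = (\<Sum>u\<in>V - T. if insert u T \<in> ind_complex V E then sg T u * c (insert u T) else 0)"
    by (rule sum.mono_neutral_left) (use assms sub in auto)
  then show ?thesis using True by (simp add: bd_def sg_def cong: if_cong)
qed (simp add: bd_def)

lemma bd_diff: "bd K (\<lambda>S. c S - d S) = (\<lambda>T. bd K c T - bd K d T)"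
proof
  fix T show "bd K (\<lambda>S. c S - d S) T = bd K c T - bd K d T"
    unfolding bd_def by (auto simp: sum_subtractf[symmetric] right_diff_distrib intro!: sum.cong)
qed
lemma bd_add: "bd K (\<lambda>S. c S + d S) = (\<lambda>T. bd K c T + bd K d T)"
proof
  fix T show "bd K (\<lambda>S. c S + d S) T = bd K c T + bd K d T"
    unfolding bd_def by (auto simp: sum.distrib[symmetric] distrib_left intro!: sum.cong)
qed
lemma bd_uminus: "bd K (\<lambda>S. - c S) = (\<lambda>T. - bd K c T)"
proof
  fix T show "bd K (\<lambda>S. - c S) T = - bd K c T"
    unfolding bd_def by (auto simp: sum_negf[symmetric] intro!: sum.cong)
qed
lemma bd_zero: "bd K (\<lambda>S. 0) = (\<lambda>T. 0)"
  by (rule ext) (simp add: bd_def cong: if_cong)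

lemma antisym_double_sum:
  fixes g :: "'v \<Rightarrow> 'v \<Rightarrow> 'a::ab_group_add"
  assumes "finite X" "\<And>u. u \<in> X \<Longrightarrow> g u u = 0"
    "\<And>u w. u \<in> X \<Longrightarrow> w \<in> X \<Longrightarrow> u \<noteq> w \<Longrightarrow> g w u = - g u w"
  shows "(\<Sum>u\<in>X. \<Sum>w\<in>X. g u w) = 0"
  using assms
proof (induction X rule: finite_induct)
  case empty show ?case by simp
next
  case (insert x X)
  have IH: "(\<Sum>u\<in>X. \<Sum>w\<in>X. g u w) = 0"
    by (rule insert.IH; (rule insert.prems(1) insert.prems(2))?; simp)
  have e1: "(\<Sum>u\<in>insert x X. \<Sum>w\<in>insert x X. g u w) = (\<Sum>w\<in>insert x X. g x w) + (\<Sum>u\<in>X. \<Sum>w\<in>insert x X. g u w)"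
    using insert.hyps by (rule sum.insert)
  have e2: "(\<Sum>w\<in>insert x X. g x w) = g x x + (\<Sum>w\<in>X. g x w)"
    using insert.hyps by (rule sum.insert)
  have e3: "(\<Sum>u\<in>X. \<Sum>w\<in>insert x X. g u w) = (\<Sum>u\<in>X. g u x + (\<Sum>w\<in>X. g u w))"
    using insert.hyps by (intro sum.cong refl sum.insert)
  have e4: "(\<Sum>u\<in>X. g u x + (\<Sum>w\<in>X. g u w)) = (\<Sum>u\<in>X. g u x) + (\<Sum>u\<in>X. \<Sum>w\<in>X. g u w)"
    by (rule sum.distrib)
  have e5: "(\<Sum>u\<in>X. g u x) = (\<Sum>u\<in>X. - g x u)"
  proof (rule sum.cong)
    fix u assume "u \<in> X"
    then show "g u x = - g x u" using insert.prems(2)[of x u] insert.hyps(2) by auto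
  qed simp
  have e6: "g x x = 0" using insert.prems(1) by simp
  show ?case unfolding e1 e2 e3 e4 e5 e6 IH by (simp add: sum_negf)
qed

lemma sg_pm: "sg T u = (1::'a::field) \<or> sg T u = -1"
  unfolding sg_def by (cases "even (card {w \<in> T. w < u})") simp_all

lemma sq_cancel: "s * s = (1::'a::field) \<Longrightarrow> s * (y * (s * x)) = y * x"
proof -
  assume "s * s = 1"
  moreover have "s * (y * (s * x)) = (s * s) * (y * x)" by (simp add: algebra_simps)
  ultimately show ?thesis by simp
qed

lemma bd_bd:
  fixes c :: "'v::linorder set \<Rightarrow> 'a::field"
  assumes fin: "finite V"
  shows "bd (ind_complex V E) (bd (ind_complex V E) c) = (\<lambda>T. 0)"
proof
  fix T
  let ?K = "ind_complex V E"
  show "bd ?K (bd ?K c) T = 0"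
  proof (cases "T \<in> ?K")
    case False thus ?thesis by (simp add: bd_def)
  next
    case True
    have finT: "finite T" using True fin ind_fin by blast
    define g where "g u w = (if u \<noteq> w \<and> insert w (insert u T) \<in> ?K
       then sg T u * sg (insert u T) w * c (insert w (insert u T)) else (0::'a))" for u w
    have inner: "(if insert u T \<in> ?K then sg T u * bd ?K c (insert u T) else 0) = (\<Sum>w\<in>V - T. g u w)"
      if u: "u \<in> V - T" for u
    proof (cases "insert u T \<in> ?K")
      case False
      have "g u w = 0" for w
        using False ind_down[of "insert w (insert u T)" V E "insert u T"] by (auto simp: g_def)
      then show ?thesis using False by simp
    next
      case True2: True
      have "(\<Sum>w\<in>V - T. g u w) = (\<Sum>w\<in>(V - T) - {u}. g u w)"
        by (rule sum.mono_neutral_right) (use fin in \<open>auto simp: g_def\<close>)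
      also have "(V - T) - {u} = V - insert u T" by auto
      also have "(\<Sum>w\<in>V - insert u T. g u w) = sg T u * (\<Sum>w\<in>V - insert u T.
          if insert w (insert u T) \<in> ?K then sg (insert u T) w * c (insert w (insert u T)) else 0)"
        unfolding sum_distrib_left
        by (rule sum.cong) (auto simp: g_def mult.assoc)
      finally show ?thesis using True2 by (simp add: bd_alt[OF fin])
    qed
    have "bd ?K (bd ?K c) T = (\<Sum>u\<in>V - T. if insert u T \<in> ?K then sg T u * bd ?K c (insert u T) else 0)"
      using True by (subst bd_alt[OF fin]) simp
    also have "\<dots> = (\<Sum>u\<in>V - T. \<Sum>w\<in>V - T. g u w)"
      by (rule sum.cong) (simp_all add: inner)
    also have "\<dots> = 0"
    proof (rule antisym_double_sum)
      show "finite (V - T)" using fin by simp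
      show "g u u = 0" for u by (simp add: g_def)
      show "g w u = - g u w" if "u \<in> V - T" "w \<in> V - T" "u \<noteq> w" for u w
      proof (cases "u < w")
        case True
        then have "\<not> w < u" by simp
        then show ?thesis using that True finT by (auto simp: g_def sg_insert insert_commute)
      next
        case False
        then have "w < u" using that by simp
        then show ?thesis using that False finT by (auto simp: g_def sg_insert insert_commute)
      qed
    qed
    finally show ?thesis .
  qed
qed

lemma bd_onlyA:
  fixes f :: "'v::linorder set \<Rightarrow> 'a::field"
  assumes fin: "finite V" and a: "a \<in> V" and T: "T \<in> ind_complex V E" "a \<notin> T"
    and f0: "\<And>S. a \<notin> S \<Longrightarrow> f S = 0"
  shows "bd (ind_complex V E) f T =
    (if insert a T \<in> ind_complex V E then sg T a * f (insert a T) else 0)"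
proof -
  have "bd (ind_complex V E) f T = (\<Sum>u\<in>V - T. if insert u T \<in> ind_complex V E then sg T u * f (insert u T) else 0)"
    using T by (simp add: bd_alt[OF fin])
  also have "\<dots> = (\<Sum>u\<in>{a}. if insert u T \<in> ind_complex V E then sg T u * f (insert u T) else 0)"
    by (rule sum.mono_neutral_right) (use fin a T f0 in auto)
  finally show ?thesis by simp
qed

lemma ind_minus: "S \<in> ind_complex (V - {v}) E \<longleftrightarrow> S \<in> ind_complex V E \<and> v \<notin> S"
  by (auto simp: ind_complex_def)

lemma bd_K1:
  fixes f :: "'v::linorder set \<Rightarrow> 'a::field"
  assumes fin: "finite V" and f0: "\<And>S. v \<in> S \<Longrightarrow> f S = 0"
  shows "bd (ind_complex V E) f T = (if v \<in> T then 0 else bd (ind_complex (V - {v}) E) f T)"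
proof (cases "v \<in> T")
  case True
  then show ?thesis using f0 by (simp add: bd_alt[OF fin] cong: if_cong)
next
  case False
  have fin1: "finite (V - {v})" using fin by simp
  show ?thesis
  proof (cases "T \<in> ind_complex V E")
    case F2: False
    then show ?thesis using False by (simp add: bd_alt[OF fin] bd_alt[OF fin1] ind_minus)
  next
    case True
    have "(\<Sum>u\<in>V - T. if insert u T \<in> ind_complex V E then sg T u * f (insert u T) else 0)
        = (\<Sum>u\<in>(V - {v}) - T. if insert u T \<in> ind_complex V E then sg T u * f (insert u T) else 0)"
      by (rule sum.mono_neutral_right) (use fin f0 in auto)
    also have "\<dots> = (\<Sum>u\<in>(V - {v}) - T. if insert u T \<in> ind_complex (V - {v}) E then sg T u * f (insert u T) else 0)"
      by (rule sum.cong) (use False in \<open>auto simp: ind_minus\<close>)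
    finally show ?thesis using True False by (simp add: bd_alt[OF fin] bd_alt[OF fin1] ind_minus)
  qed
qed

lemma link_bd:
  fixes c :: "'v::linorder set \<Rightarrow> 'a::field"
  assumes fin: "finite V" and v: "v \<in> V" and nl: "{v} \<notin> E"
    and T: "T \<in> ind_complex {u\<in>V. u \<noteq> v \<and> {u,v} \<notin> E} E"
  shows "bd (ind_complex V E) c (insert v T) = - sg T v *
     bd (ind_complex {u\<in>V. u \<noteq> v \<and> {u,v} \<notin> E} E) (\<lambda>S. if v \<notin> S then sg S v * c (insert v S) else 0) T"
proof -
  define V' where "V' = {u\<in>V. u \<noteq> v \<and> {u,v} \<notin> E}"
  define cv where "cv = (\<lambda>S. if v \<notin> S then sg S v * c (insert v S) else 0)"
  have fin': "finite V'" using fin by (simp add: V'_def)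
  have TL: "T \<in> ind_complex V' E" using T by (simp add: V'_def)
  have TV': "T \<subseteq> V'" using TL ind_sub by blast
  have vT: "v \<notin> T" using TV' by (auto simp: V'_def)
  have finT: "finite T" using TV' fin' finite_subset by blast
  have ivK: "insert v T \<in> ind_complex V E"
    using TL v nl TV' by (auto simp: ind_complex_def V'_def insert_commute)
  have memb: "insert u (insert v T) \<in> ind_complex V E \<longleftrightarrow> insert u T \<in> ind_complex V' E"
    if "u \<in> V - insert v T" for u
    using that TL v nl TV' by (auto simp: ind_complex_def V'_def insert_commute)
  have "bd (ind_complex V' E) cv T = (\<Sum>u\<in>V' - T. if insert u T \<in> ind_complex V' E then sg T u * cv (insert u T) else 0)"
    using TL by (simp add: bd_alt[OF fin'])
  also have "\<dots> = (\<Sum>u\<in>V - insert v T. if insert u T \<in> ind_complex V' E then sg T u * cv (insert u T) else 0)"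
    by (rule sum.mono_neutral_left) (use fin ind_sub in \<open>auto simp: V'_def\<close>)
  finally have R: "- sg T v * bd (ind_complex V' E) cv T = (\<Sum>u\<in>V - insert v T.
       - sg T v * (if insert u T \<in> ind_complex V' E then sg T u * cv (insert u T) else 0))"
    by (simp add: sum_distrib_left)
  have L: "bd (ind_complex V E) c (insert v T) = (\<Sum>u\<in>V - insert v T.
     if insert u (insert v T) \<in> ind_complex V E then sg (insert v T) u * c (insert u (insert v T)) else 0)"
    using ivK by (simp add: bd_alt[OF fin])
  have "bd (ind_complex V E) c (insert v T) = - sg T v * bd (ind_complex V' E) cv T"
    unfolding L R
  proof (rule sum.cong)
    fix u assume u: "u \<in> V - insert v T"
    show "(if insert u (insert v T) \<in> ind_complex V E then sg (insert v T) u * c (insert u (insert v T)) else 0) =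
       - sg T v * (if insert u T \<in> ind_complex V' E then sg T u * cv (insert u T) else 0)"
    proof (cases "insert u T \<in> ind_complex V' E")
      case False then show ?thesis using memb[OF u] by simp
    next
      case True
      have uT: "u \<notin> T" "u \<noteq> v" using u by auto
      have cv: "cv (insert u T) = sg (insert u T) v * c (insert v (insert u T))"
        using uT vT by (simp add: cv_def)
      have A: "insert v (insert u T) = insert u (insert v T)" by auto
      show ?thesis
      proof (cases "u < v")
        case True
        then have "\<not> v < u" by simp
        then show ?thesis using \<open>insert u T \<in> ind_complex V' E\<close> memb[OF u] uT vT finT True
          by (simp add: cv sg_insert A sq_cancel[OF sg_sq])
      next
        case False
        then have "v < u" using uT by simp
        then show ?thesis using \<open>insert u T \<in> ind_complex V' E\<close> memb[OF u] uT vT finT False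
          by (simp add: cv sg_insert A sq_cancel[OF sg_sq])
      qed
    qed
  qed simp
  then show ?thesis by (simp add: V'_def cv_def)
qed

lemma bd_chains:
  fixes c :: "'v::linorder set \<Rightarrow> 'a::field"
  assumes fin: "finite V" and c: "c \<in> chains (ind_complex V E) (k+1)"
  shows "bd (ind_complex V E) c \<in> chains (ind_complex V E) k"
  unfolding chains_def
proof (intro CollectI allI impI)
  fix S assume nz: "bd (ind_complex V E) c S \<noteq> 0"
  then have SK: "S \<in> ind_complex V E" by (cases "S \<in> ind_complex V E") (simp_all add: bd_def)
  have finS: "finite S" using SK fin ind_fin by blast
  have "(\<Sum>u\<in>V - S. if insert u S \<in> ind_complex V E then sg S u * c (insert u S) else 0) \<noteq> 0"
    using nz SK by (simp add: bd_alt[OF fin])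
  then obtain u where u: "u \<in> V - S" and
     nz2: "(if insert u S \<in> ind_complex V E then sg S u * c (insert u S) else 0) \<noteq> 0"
    by (rule sum.not_neutral_contains_not_neutral)
  have "c (insert u S) \<noteq> 0"
  proof
    assume "c (insert u S) = 0" then show False using nz2 by (simp split: if_splits)
  qed
  then have "int (card (insert u S)) = k + 1 + 1" using c unfolding chains_def by blast
  moreover have "card (insert u S) = Suc (card S)" using u finS by simp
  ultimately show "S \<in> ind_complex V E \<and> int (card S) = k + 1" using SK by simp
qed

lemma rht_low:
  assumes "k < -1"
  shows "reduced_homology_trivial TYPE('a::field) (K :: 'v::linorder set set) k"
  unfolding reduced_homology_trivial_def
proof (intro allI impI)
  fix c :: "'v set \<Rightarrow> 'a" assume "c \<in> chains K k \<and> bd K c = (\<lambda>_. 0)"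
  then have cK: "c \<in> chains K k" by auto
  have c0: "c = (\<lambda>_. 0)"
  proof
    fix S show "c S = 0"
    proof (rule ccontr)
      assume "c S \<noteq> 0"
      then have "int (card S) = k + 1" using cK unfolding chains_def by blast
      then show False using assms by simp
    qed
  qed
  show "\<exists>d\<in>chains K (k+1). bd K d = c"
    by (rule bexI[of _ "\<lambda>_. 0"]) (auto simp: c0 chains_def bd_zero)
qed

lemma step:
  fixes V :: "'v::linorder set"
  assumes fin: "finite V" and nl: "\<And>x. {x} \<notin> E" and v: "v \<in> V"
    and H1: "reduced_homology_trivial TYPE('a::field) (ind_complex (V - {v}) E) k"
    and H2: "reduced_homology_trivial TYPE('a) (ind_complex {u\<in>V. u \<noteq> v \<and> {u,v} \<notin> E} E) (k - 1)"
  shows "reduced_homology_trivial TYPE('a) (ind_complex V E) k"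
  unfolding reduced_homology_trivial_def
proof (intro allI impI)
  define V' where "V' = {u\<in>V. u \<noteq> v \<and> {u,v} \<notin> E}"
  let ?K = "ind_complex V E"
  let ?K1 = "ind_complex (V - {v}) E"
  let ?L = "ind_complex V' E"
  fix c :: "'v set \<Rightarrow> 'a" assume "c \<in> chains ?K k \<and> bd ?K c = (\<lambda>_. 0)"
  then have cK: "c \<in> chains ?K k" and cyc: "bd ?K c = (\<lambda>_. 0)" by auto
  have fin': "finite V'" using fin by (simp add: V'_def)
  have Lsub: "v \<notin> T" if "T \<in> ?L" for T using ind_sub[OF that] by (auto simp: V'_def)
  have LinsK: "insert v T \<in> ?K" if "T \<in> ?L" for T
    using that ind_sub[OF that] v nl by (auto simp: ind_complex_def V'_def insert_commute)
  have KL: "S - {v} \<in> ?L" if "S \<in> ?K" "v \<in> S" for S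
    using that by (auto simp: ind_complex_def V'_def)
  have KvL: "S \<in> ?L" if "insert v S \<in> ?K" "v \<notin> S" for S
    using KL[OF that(1)] that(2) by simp
  define cv where "cv = (\<lambda>S. if v \<notin> S then sg S v * c (insert v S) else (0::'a))"
  have link: "bd ?K f (insert v T) = - sg T v * bd ?L (\<lambda>S. if v \<notin> S then sg S v * f (insert v S) else 0) T"
    if "T \<in> ?L" for T and f :: "'v set \<Rightarrow> 'a"
    using link_bd[OF fin v nl, of T f] that by (simp add: V'_def)
  have c2ch: "cv \<in> chains ?L (k - 1)"
    unfolding chains_def
  proof (intro CollectI allI impI)
    fix S assume "cv S \<noteq> 0"
    then have vS: "v \<notin> S" and nz: "c (insert v S) \<noteq> 0" by (auto simp: cv_def split: if_splits)
    then have iK: "insert v S \<in> ?K" and cd: "int (card (insert v S)) = k + 1"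
      using cK unfolding chains_def by blast+
    have "finite (insert v S)" by (rule ind_fin[OF fin iK])
    then have "card (insert v S) = Suc (card S)" using vS by simp
    then show "S \<in> ?L \<and> int (card S) = k - 1 + 1" using vS KvL[OF iK vS] cd by simp
  qed
  have c2cyc: "bd ?L cv = (\<lambda>_. 0)"
  proof
    fix T show "bd ?L cv T = 0"
    proof (cases "T \<in> ?L")
      case True
      have "- sg T v * bd ?L cv T = 0" using link[OF True, of c] cyc unfolding cv_def by simp
      then show ?thesis using sg_nz[of T v, where 'a='a] by simp
    next
      case False thus ?thesis by (simp add: bd_def)
    qed
  qed
  obtain d2 where d2: "d2 \<in> chains ?L (k - 1 + 1)" "bd ?L d2 = cv"
    using H2[folded V'_def] c2ch c2cyc unfolding reduced_homology_trivial_def by blast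
  have d2L: "S \<in> ?L \<and> int (card S) = k + 1" if "d2 S \<noteq> 0" for S
    using d2(1) that unfolding chains_def by simp
  define d' where "d' = (\<lambda>S. if v \<in> S then - sg (S - {v}) v * d2 (S - {v}) else (0::'a))"
  have d'ch: "d' \<in> chains ?K (k+1)"
    unfolding chains_def
  proof (intro CollectI allI impI)
    fix S assume "d' S \<noteq> 0"
    then have vS: "v \<in> S" and nz: "d2 (S - {v}) \<noteq> 0" by (auto simp: d'_def split: if_splits)
    then have L: "S - {v} \<in> ?L" and cd: "int (card (S - {v})) = k + 1" using d2L[OF nz] by blast+
    have "S = insert v (S - {v})" using vS by auto
    then have SK: "S \<in> ?K" using LinsK[OF L] by simp
    have "finite S" by (rule ind_fin[OF fin SK])
    then have "card S = Suc (card (S - {v}))" using card_Suc_Diff1[symmetric, OF _ vS] by blast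
    then show "S \<in> ?K \<and> int (card S) = k + 1 + 1" using SK cd by simp
  qed
  have d'v: "(\<lambda>S. if v \<notin> S then sg S v * d' (insert v S) else 0) = (\<lambda>S. - d2 S)"
  proof
    fix S show "(if v \<notin> S then sg S v * d' (insert v S) else 0) = - d2 S"
    proof (cases "v \<in> S")
      case True
      then have "d2 S = 0" using d2L Lsub by blast
      then show ?thesis using True by simp
    next
      case False
      then have "insert v S - {v} = S" by auto
      then show ?thesis using False by (simp add: d'_def sg_sq2)
    qed
  qed
  have bdd'v: "bd ?K d' (insert v T) = c (insert v T)" if T: "T \<in> ?L" for T
  proof -
    have "bd ?K d' (insert v T) = - sg T v * bd ?L (\<lambda>S. - d2 S) T" using link[OF T, of d'] d'v by simp
    also have "\<dots> = sg T v * cv T" using d2(2) by (simp add: bd_uminus)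
    also have "\<dots> = c (insert v T)" using Lsub[OF T] by (simp add: cv_def sg_sq2)
    finally show ?thesis .
  qed
  define c' where "c' = (\<lambda>S. c S - bd ?K d' S)"
  have bdd'ch: "bd ?K d' \<in> chains ?K k" using bd_chains[OF fin d'ch] .
  have c'ch: "c' \<in> chains ?K k"
    unfolding chains_def
  proof (intro CollectI allI impI)
    fix S assume "c' S \<noteq> 0"
    then have "c S \<noteq> 0 \<or> bd ?K d' S \<noteq> 0" by (auto simp: c'_def)
    then show "S \<in> ?K \<and> int (card S) = k + 1"
      using cK bdd'ch unfolding chains_def by blast
  qed
  have c'v: "c' S = 0" if "v \<in> S" for S
  proof (cases "S \<in> ?K")
    case True
    have L: "S - {v} \<in> ?L" using KL[OF True that] .
    have "S = insert v (S - {v})" using that by auto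
    then have "bd ?K d' S = c S" using bdd'v[OF L] by simp
    then show ?thesis by (simp add: c'_def)
  next
    case False
    then have "c S = 0" using cK unfolding chains_def by blast
    moreover have "bd ?K d' S = 0" using False by (simp add: bd_def)
    ultimately show ?thesis by (simp add: c'_def)
  qed
  have c'cyc: "bd ?K c' = (\<lambda>_. 0)"
    unfolding c'_def bd_diff bd_bd[OF fin] cyc by simp
  have c'K1: "c' \<in> chains ?K1 k"
    unfolding chains_def
  proof (intro CollectI allI impI)
    fix S assume nz: "c' S \<noteq> 0"
    then have "v \<notin> S" using c'v by blast
    moreover have "S \<in> ?K \<and> int (card S) = k + 1" using nz c'ch unfolding chains_def by blast
    ultimately show "S \<in> ?K1 \<and> int (card S) = k + 1" by (simp add: ind_minus)
  qed
  have c'cyc1: "bd ?K1 c' = (\<lambda>_. 0)"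
  proof
    fix T show "bd ?K1 c' T = 0"
    proof (cases "v \<in> T")
      case True then have "T \<notin> ?K1" by (simp add: ind_minus)
      then show ?thesis by (simp add: bd_def)
    next
      case False
      have "bd ?K c' T = bd ?K1 c' T" using bd_K1[OF fin c'v, where E = E and T = T] False by simp
      moreover have "bd ?K c' T = 0" using c'cyc by simp
      ultimately show ?thesis by simp
    qed
  qed
  obtain e where e: "e \<in> chains ?K1 (k+1)" "bd ?K1 e = c'"
    using H1 c'K1 c'cyc1 unfolding reduced_homology_trivial_def by blast
  have ev: "e S = 0" if "v \<in> S" for S
  proof (rule ccontr)
    assume "e S \<noteq> 0"
    then have "S \<in> ?K1" using e(1) unfolding chains_def by blast
    then show False using that by (simp add: ind_minus)
  qed
  have eK: "e \<in> chains ?K (k+1)"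
    using e(1) unfolding chains_def by (auto simp: ind_minus)
  have bde: "bd ?K e = c'"
  proof
    fix T show "bd ?K e T = c' T"
      using bd_K1[OF fin ev, where E = E and T = T] e(2) c'v by (cases "v \<in> T") auto
  qed
  show "\<exists>d\<in>chains ?K (k+1). bd ?K d = c"
  proof (rule bexI[of _ "\<lambda>S. e S + d' S"])
    show "bd ?K (\<lambda>S. e S + d' S) = c" unfolding bd_add bde c'_def by simp
    show "(\<lambda>S. e S + d' S) \<in> chains ?K (k+1)"
      unfolding chains_def
    proof (intro CollectI allI impI)
      fix S assume "e S + d' S \<noteq> 0"
      then have "e S \<noteq> 0 \<or> d' S \<noteq> 0" by auto
      then show "S \<in> ?K \<and> int (card S) = k + 1 + 1"
        using eK d'ch unfolding chains_def by blast
    qed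
  qed
qed

lemma cone:
  fixes V :: "'v::linorder set"
  assumes fin: "finite V" and a: "a \<in> V" and iso: "\<And>u. u \<in> V \<Longrightarrow> {a,u} \<notin> E"
  shows "reduced_homology_trivial TYPE('a::field) (ind_complex V E) k"
  unfolding reduced_homology_trivial_def
proof (intro allI impI)
  let ?K = "ind_complex V E"
  fix c :: "'v set \<Rightarrow> 'a" assume "c \<in> chains ?K k \<and> bd ?K c = (\<lambda>_. 0)"
  then have cK: "c \<in> chains ?K k" and cyc: "bd ?K c = (\<lambda>_. 0)" by auto
  have insK: "insert a T \<in> ?K" if "T \<in> ?K" for T
  proof -
    have "{a,a} \<notin> E" using iso[OF a] .
    then show ?thesis using that a iso ind_sub[OF that]
      by (auto simp: ind_complex_def insert_commute)
  qed
  define d where "d = (\<lambda>S. if a \<in> S then sg (S - {a}) a * c (S - {a}) else (0::'a))"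
  have d0: "d S = 0" if "a \<notin> S" for S using that by (simp add: d_def)
  have dch: "d \<in> chains ?K (k+1)"
    unfolding chains_def
  proof (intro CollectI allI impI)
    fix S assume "d S \<noteq> 0"
    then have aS: "a \<in> S" and nz: "c (S - {a}) \<noteq> 0" by (auto simp: d_def split: if_splits)
    then have SK0: "S - {a} \<in> ?K" and cd: "int (card (S - {a})) = k + 1"
      using cK unfolding chains_def by blast+
    have "S = insert a (S - {a})" using aS by auto
    then have SK: "S \<in> ?K" using insK[OF SK0] by simp
    have "finite S" by (rule ind_fin[OF fin SK])
    then have "card S = Suc (card (S - {a}))" using card_Suc_Diff1[symmetric, OF _ aS] by blast
    then show "S \<in> ?K \<and> int (card S) = k + 1 + 1" using SK cd by simp
  qed
  have bdd: "bd ?K d T = c T" if T: "T \<in> ?K" "a \<notin> T" for T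
  proof -
    have "bd ?K d T = sg T a * d (insert a T)"
      using bd_onlyA[OF fin a T(1) T(2) d0] insK[OF T(1)] by simp
    also have "\<dots> = c T" using T(2) by (simp add: d_def sg_sq2)
    finally show ?thesis .
  qed
  define c'' where "c'' = (\<lambda>S. c S - bd ?K d S)"
  have c''0: "c'' S = 0" if "a \<notin> S" for S
  proof (cases "S \<in> ?K")
    case True then show ?thesis using bdd[OF True that] by (simp add: c''_def)
  next
    case False
    then have "c S = 0" using cK unfolding chains_def by blast
    moreover have "bd ?K d S = 0" using False by (simp add: bd_def)
    ultimately show ?thesis by (simp add: c''_def)
  qed
  have c''cyc: "bd ?K c'' = (\<lambda>_. 0)"
    unfolding c''_def bd_diff bd_bd[OF fin] cyc by simp
  have all0: "c'' S = 0" for S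
  proof (cases "a \<in> S")
    case False thus ?thesis by (rule c''0)
  next
    case True
    show ?thesis
    proof (cases "S \<in> ?K")
      case False
      then have "c S = 0" using cK unfolding chains_def by blast
      moreover have "bd ?K d S = 0" using False by (simp add: bd_def)
      ultimately show ?thesis by (simp add: c''_def)
    next
      case SK: True
      have T: "S - {a} \<in> ?K" "a \<notin> S - {a}" using ind_down[OF SK] by auto
      have "bd ?K c'' (S - {a}) = sg (S - {a}) a * c'' (insert a (S - {a}))"
        using bd_onlyA[OF fin a T c''0] insK[OF T(1)] by simp
      moreover have "insert a (S - {a}) = S" using True by auto
      moreover have "bd ?K c'' (S - {a}) = 0" using c''cyc by simp
      ultimately have "sg (S - {a}) a * c'' S = 0" by simp
      then show ?thesis using sg_nz[of "S - {a}" a, where 'a='a] by simp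
    qed
  qed
  have "c = bd ?K d"
  proof
    fix S show "c S = bd ?K d S" using all0[of S] by (simp add: c''_def)
  qed
  then show "\<exists>d\<in>chains ?K (k+1). bd ?K d = c" using dch by auto
qed

lemma main_ind:
  fixes V :: "'v::linorder set"
  assumes "finite V" "\<And>x. {x} \<notin> E" "A \<subseteq> V"
    "\<And>a b. a \<in> A \<Longrightarrow> b \<in> A \<Longrightarrow> a \<noteq> b \<Longrightarrow> {a,b} \<notin> E"
    "\<And>a b x. a \<in> A \<Longrightarrow> b \<in> A \<Longrightarrow> a \<noteq> b \<Longrightarrow> {a,x} \<in> E \<Longrightarrow> {b,x} \<in> E \<Longrightarrow> False"
    "k < int (card A) - 1"
  shows "reduced_homology_trivial TYPE('a::field) (ind_complex V E) k"
  using assms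
proof (induction "card V" arbitrary: V A k rule: less_induct)
  case less
  have fin: "finite V" by (rule less.prems(1))
  have nl: "\<And>x. {x} \<notin> E" by (rule less.prems(2))
  show ?case
  proof (cases "V \<subseteq> A")
    case True
    then have VA: "V = A" using less.prems(3) by auto
    show ?thesis
    proof (cases "A = {}")
      case True
      then have "k < -1" using less.prems(6) by simp
      then show ?thesis by (rule rht_low)
    next
      case False
      then obtain a where a: "a \<in> A" by auto
      show ?thesis
      proof (rule cone[OF fin])
        show "a \<in> V" using a VA by simp
        show "{a,u} \<notin> E" if "u \<in> V" for u
        proof (cases "u = a")
          case True then show ?thesis using nl[of a] by simp
        next
          case False then show ?thesis using less.prems(4)[of a u] a that VA by auto
        qed
      qed
    qed
  next
    case False
    then obtain v where v: "v \<in> V" "v \<notin> A" by auto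
    define V' where "V' = {u\<in>V. u \<noteq> v \<and> {u,v} \<notin> E}"
    define A' where "A' = A \<inter> V'"
    have H1: "reduced_homology_trivial TYPE('a) (ind_complex (V - {v}) E) k"
    proof (rule less.hyps)
      show "card (V - {v}) < card V" by (rule card_Diff1_less[OF fin v(1)])
      show "finite (V - {v})" using fin by simp
      show "A \<subseteq> V - {v}" using less.prems(3) v by auto
    qed (use less.prems in auto)
    have finA: "finite A" using less.prems(3) fin finite_subset by blast
    define B where "B = {a\<in>A. {a,v} \<in> E}"
    have AB: "A \<subseteq> A' \<union> B" using less.prems(3) v(2) by (auto simp: A'_def V'_def B_def)
    have cardB: "card B \<le> 1"
    proof -
      have "finite B" using finA by (simp add: B_def)
      moreover have "\<forall>a\<in>B. \<forall>b\<in>B. a = b"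
        using less.prems(5)[of _ _ v] by (auto simp: B_def)
      ultimately show ?thesis by (simp add: card_le_Suc0_iff_eq)
    qed
    have "card A \<le> card (A' \<union> B)" using AB finA by (intro card_mono) (auto simp: A'_def B_def)
    also have "\<dots> \<le> card A' + card B" by (rule card_Un_le)
    finally have cA: "card A \<le> card A' + 1" using cardB by simp
    have H2: "reduced_homology_trivial TYPE('a) (ind_complex V' E) (k - 1)"
    proof (rule less.hyps[where A = A'])
      show "card V' < card V" using fin v(1) unfolding V'_def by (intro psubset_card_mono) auto
      show "finite V'" using fin by (simp add: V'_def)
      show "A' \<subseteq> V'" by (simp add: A'_def)
      show "k - 1 < int (card A') - 1" using less.prems(6) cA by linarith
    qed (use less.prems in \<open>auto simp: A'_def\<close>)
    show ?thesis by (rule step[OF fin nl v(1) H1 H2[unfolded V'_def]])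
  qed
qed

definition wt :: "nat \<Rightarrow> int list \<Rightarrow> int" where
  "wt l x = (\<Sum>i<l. int (i+1) * x!i)"

lemma adj_sym: "lattice_adj l u v \<Longrightarrow> lattice_adj l v u"
  unfolding lattice_adj_def by (simp add: power2_commute)

lemma adj_char:
  assumes "lattice_adj l u v"
  shows "\<exists>i<l. \<exists>\<delta>::int. (\<delta> = 1 \<or> \<delta> = -1) \<and> (\<forall>m<l. u!m - v!m = (if m = i then \<delta> else 0))"
proof -
  define d where "d m = u!m - v!m" for m
  have S: "(\<Sum>m<l. (d m)^2) = 1" using assms by (simp add: lattice_adj_def d_def)
  have "\<exists>i<l. d i \<noteq> 0"
  proof (rule ccontr)
    assume "\<not> (\<exists>i<l. d i \<noteq> 0)"
    then have "(\<Sum>m<l. (d m)^2) = 0" by (intro sum.neutral) auto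
    then show False using S by simp
  qed
  then obtain i where i: "i < l" "d i \<noteq> 0" by blast
  have ge1: "(d i)^2 \<ge> 1"
  proof -
    have "(d i)^2 > 0" using i(2) by simp
    then show ?thesis by linarith
  qed
  have others: "d m = 0" if "m < l" "m \<noteq> i" for m
  proof -
    have "(\<Sum>m'\<in>{i,m}. (d m')^2) \<le> (\<Sum>m<l. (d m)^2)"
      by (rule sum_mono2) (use i that in auto)
    then have "(d i)^2 + (d m)^2 \<le> 1" using S that by simp
    then have "(d m)^2 \<le> 0" using ge1 by linarith
    then show ?thesis by simp
  qed
  have "(d i)^2 \<le> 1"
    using member_le_sum[of i "{..<l}" "\<lambda>m. (d m)^2"] i S by simp
  then have "(d i)^2 = 1" using ge1 by simp
  then have "d i = 1 \<or> d i = -1" by (simp add: power2_eq_1_iff)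
  then show ?thesis
    using i others by (intro exI[of _ i] conjI exI[of _ "d i"]) (auto simp: d_def)
qed

lemma wt_diff:
  assumes "\<forall>m<l. u!m - v!m = (if m = i then \<delta> else 0)" "i < l"
  shows "wt l u - wt l v = int (i+1) * \<delta>"
proof -
  have "wt l u - wt l v = (\<Sum>m<l. int (m+1) * (u!m - v!m))"
    by (simp add: wt_def sum_subtractf[symmetric] right_diff_distrib)
  also have "\<dots> = (\<Sum>m<l. if m = i then int (m+1) * \<delta> else 0)"
    by (rule sum.cong) (use assms in auto)
  also have "\<dots> = int (i+1) * \<delta>" using assms(2) by simp
  finally show ?thesis .
qed

lemma dvd_small:
  assumes d: "(p::int) dvd z" and b: "\<bar>z\<bar> < p"
  shows "z = 0"
proof (rule ccontr)
  assume "z \<noteq> 0"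
  then have "\<bar>p\<bar> \<le> \<bar>z\<bar>" using dvd_imp_le_int d by blast
  then show False using b by linarith
qed

lemma E_adj:
  assumes "E \<subseteq> {{u, v} | u v. u \<in> V \<and> v \<in> V \<and> lattice_adj l u v}" "{a,b} \<in> E"
  shows "lattice_adj l a b"
proof -
  have "{a,b} \<in> {{u, v} | u v. u \<in> V \<and> v \<in> V \<and> lattice_adj l u v}" using assms by (rule subsetD)
  then obtain u v where "{a,b} = {u,v}" "lattice_adj l u v" by auto
  then show ?thesis by (auto simp: doubleton_eq_iff intro: adj_sym)
qed

lemma adj_irrefl: "\<not> lattice_adj l x x"
  unfolding lattice_adj_def by simp

lemma same_class_nonadj:
  assumes "lattice_adj l a b" "wt l a mod int (2*l+1) = wt l b mod int (2*l+1)"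
  shows False
proof -
  obtain i \<delta> where i: "i < l" "\<delta> = 1 \<or> \<delta> = -1" "\<forall>m<l. a!m - b!m = (if m = i then \<delta> else 0)"
    using adj_char[OF assms(1)] by blast
  have w: "wt l a - wt l b = int (i+1) * \<delta>" using wt_diff[OF i(3) i(1)] .
  have "int (2*l+1) dvd wt l a - wt l b" using assms(2) by (simp add: mod_eq_dvd_iff)
  moreover have "\<bar>wt l a - wt l b\<bar> < int (2*l+1)" using w i by auto
  ultimately have "wt l a - wt l b = 0" by (rule dvd_small)
  then show False using w i by auto
qed

lemma same_class_nocommon:
  assumes "lattice_adj l a x" "lattice_adj l b x" "a \<noteq> b"
    "wt l a mod int (2*l+1) = wt l b mod int (2*l+1)"
  shows False
proof -
  obtain i \<delta> where i: "i < l" "\<delta> = 1 \<or> \<delta> = -1" "\<forall>m<l. a!m - x!m = (if m = i then \<delta> else 0)"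
    using adj_char[OF assms(1)] by blast
  obtain j \<epsilon> where j: "j < l" "\<epsilon> = 1 \<or> \<epsilon> = -1" "\<forall>m<l. b!m - x!m = (if m = j then \<epsilon> else 0)"
    using adj_char[OF assms(2)] by blast
  have w1: "wt l a - wt l x = int (i+1) * \<delta>" using wt_diff[OF i(3) i(1)] .
  have w2: "wt l b - wt l x = int (j+1) * \<epsilon>" using wt_diff[OF j(3) j(1)] .
  have "int (2*l+1) dvd wt l a - wt l b" using assms(4) by (simp add: mod_eq_dvd_iff)
  moreover have "\<bar>wt l a - wt l b\<bar> < int (2*l+1)" using w1 w2 i j by auto
  ultimately have "wt l a - wt l b = 0" by (rule dvd_small)
  then have eq: "int (i+1) * \<delta> = int (j+1) * \<epsilon>" using w1 w2 by simp
  then have ij: "i = j \<and> \<delta> = \<epsilon>" using i(2) j(2) by auto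
  have la: "length a = l" and lb: "length b = l"
    using assms(1,2) by (auto simp: lattice_adj_def)
  have "a = b"
  proof (rule nth_equalityI)
    show "length a = length b" using la lb by simp
    fix m assume "m < length a"
    then have "m < l" using la by simp
    then have "a!m - x!m = b!m - x!m" using i(3) j(3) ij by auto
    then show "a!m = b!m" by simp
  qed
  then show False using assms(3) by simp
qed

lemma pigeon:
  fixes f :: "'b \<Rightarrow> nat"
  assumes "finite V" "\<And>x. x \<in> V \<Longrightarrow> f x < p" "p > 0"
  shows "\<exists>r<p. card V \<le> p * card {x\<in>V. f x = r}"
proof (rule ccontr)
  assume H: "\<not> ?thesis"
  have "V \<subseteq> (\<Union>r<p. {x\<in>V. f x = r})" using assms(2) by auto
  then have "card V \<le> card (\<Union>r<p. {x\<in>V. f x = r})"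
    by (intro card_mono) (use assms(1) in auto)
  also have "\<dots> \<le> (\<Sum>r<p. card {x\<in>V. f x = r})" by (rule card_UN_le) simp
  finally have c1: "p * card V \<le> p * (\<Sum>r<p. card {x\<in>V. f x = r})" by simp
  have "(\<Sum>r<p. p * card {x\<in>V. f x = r}) < (\<Sum>r<p. card V)"
    by (rule sum_strict_mono) (use H assms(3) in \<open>auto simp: not_le\<close>)
  then have "p * (\<Sum>r<p. card {x\<in>V. f x = r}) < p * card V" by (simp add: sum_distrib_left)
  then show False using c1 by simp
qed

theorem corollary6p14:
  fixes l :: nat and V :: "int list set" and E :: "int list set set" and k :: int
  assumes "l \<ge> 1"
    and "lattice_subgraph l V E"
    and "real_of_int k < real (card V) / real (2 * l + 1) - 1"
  shows "reduced_homology_trivial TYPE('a::field) (ind_complex V E) k"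
proof -
  have fin: "finite V" and ES: "E \<subseteq> {{u, v} | u v. u \<in> V \<and> v \<in> V \<and> lattice_adj l u v}"
    using assms(2) by (auto simp: lattice_subgraph_def)
  define p where "p = 2*l+1"
  have p0: "p > 0" by (simp add: p_def)
  define f where "f x = nat (wt l x mod int p)" for x
  have fp: "f x < p" for x
  proof -
    have "wt l x mod int p < int p" using p0 by simp
    moreover have "0 \<le> wt l x mod int p" using p0 by simp
    ultimately show ?thesis unfolding f_def by (simp add: nat_less_iff)
  qed
  have fpV: "f x < p" if "x \<in> V" for x by (rule fp)
  from pigeon[where V=V and f=f and p=p, OF fin fpV p0] obtain r where r: "r < p" "card V \<le> p * card {x\<in>V. f x = r}"
    by blast
  define A where "A = {x\<in>V. f x = r}"
  have AV: "A \<subseteq> V" by (auto simp: A_def)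
  have same: "wt l a mod int (2*l+1) = wt l b mod int (2*l+1)" if "a \<in> A" "b \<in> A" for a b
  proof -
    have "f a = f b" using that by (simp add: A_def)
    moreover have "0 \<le> wt l a mod int p" "0 \<le> wt l b mod int p" using p0 by simp_all
    ultimately have "wt l a mod int p = wt l b mod int p" unfolding f_def by simp
    then show ?thesis by (simp add: p_def)
  qed
  have nl: "{x} \<notin> E" for x
  proof
    assume "{x} \<in> E"
    then have "{x,x} \<in> E" by simp
    then have "lattice_adj l x x" by (rule E_adj[OF ES])
    then show False by (simp add: adj_irrefl)
  qed
  have p4: "{a,b} \<notin> E" if "a \<in> A" "b \<in> A" "a \<noteq> b" for a b
  proof
    assume "{a,b} \<in> E"
    then have "lattice_adj l a b" by (rule E_adj[OF ES])
    then show False using same_class_nonadj same[OF that(1,2)] by blast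
  qed
  have p5: False if "a \<in> A" "b \<in> A" "a \<noteq> b" "{a,x} \<in> E" "{b,x} \<in> E" for a b x
  proof -
    have "lattice_adj l a x" using that(4) by (rule E_adj[OF ES])
    moreover have "lattice_adj l b x" using that(5) by (rule E_adj[OF ES])
    ultimately show False using same_class_nocommon same[OF that(1,2)] that(3) by blast
  qed
  have "real (card V) \<le> real p * real (card A)" using r(2) unfolding A_def
    by (metis of_nat_le_iff of_nat_mult)
  then have "real (card V) / real p \<le> real (card A)" using p0 by (simp add: divide_le_eq mult.commute)
  then have "real_of_int k < real (card A) - 1" using assms(3) by (simp add: p_def)
  then have kA: "k < int (card A) - 1" by linarith
  show ?thesis by (rule main_ind[OF fin nl AV p4 p5 kA])
qed

end
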